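(* Assume $\delta>d$. Then the limit $$G_f^\alpha(z,w)=\lim_{n\to\infty}\frac{1}{\delta^n}\log^+\max\{|p^n(z)|^\alpha,\,|Q_z^n(w)|\}$$ exists for every $(z,w)\in\mathbb{C}^2$ and equals $\alpha G_p(z)$.
   Context: Let $p(z)=z^\delta+O(z^{\delta-1})$ be a monic polynomial of degree $\delta\ge 2$, and let $q(z,w)=b(z)w^d+(\text{terms of lower degree in } w)$ be a polynomial with $d=\deg_w q\ge 2$, where $b$ is a monic polynomial of degree $\gamma\ge 0$. Let $f(z,w)=(p(z),q(z,w))$. Write $q_z(w)=q(z,w)$ and $Q_z^n=q_{p^{n-1}(z)}\circ\cdots\circ q_{p(z)}\circ q_z$, so that $f^n(z,w)=(p^n(z),Q_z^n(w))$. Let $G_p(z)=\lim_{n\to\infty}\delta^{-n}\log^+|p^n(z)|$ (the Green function of $p$). For $\delta>d$, define $$\alpha=\max\Big\{\frac{n_j}{\delta-m_j}\;:\; z^{n_j}w^{m_j}\text{ is a monomial appearing in } q \text{ with nonzero coefficient}\Big\}\ \ (\ge 0).$$ *)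

theory Defs
  imports "HOL-Analysis.Analysis" "HOL-Computational_Algebra.Polynomial"
begin

definition logplus :: "real \<Rightarrow> real" where
  "logplus x = max 0 (ln x)"

text \<open>A polynomial q(z,w) in two variables is represented as a polynomial in w
  whose coefficients are polynomials in z. Evaluation q(z,w):\<close>
definition eval2 :: "complex poly poly \<Rightarrow> complex \<Rightarrow> complex \<Rightarrow> complex" where
  "eval2 q z w = poly (map_poly (\<lambda>a. poly a z) q) w"

text \<open>Fibre iterates Q_z^n = q_{p^{n-1}(z)} o ... o q_z.\<close>
fun Qiter :: "complex poly \<Rightarrow> complex poly poly \<Rightarrow> nat \<Rightarrow> complex \<Rightarrow> complex \<Rightarrow> complex" where
  "Qiter p q 0 z w = w"
| "Qiter p q (Suc n) z w = eval2 q ((poly p ^^ n) z) (Qiter p q n z w)"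

definition green :: "complex poly \<Rightarrow> complex \<Rightarrow> real" where
  "green p z = lim (\<lambda>n. logplus (cmod ((poly p ^^ n) z)) / real (degree p) ^ n)"

definition alpha_exp :: "complex poly \<Rightarrow> complex poly poly \<Rightarrow> real" where
  "alpha_exp p q = Max {real i / (real (degree p) - real j) | i j. coeff (coeff q j) i \<noteq> 0}"

end

theory Submission
  imports Defs
begin

lemma logplus_nonneg: "0 \<le> logplus x" by (simp add: logplus_def)

lemma exp_logplus: "0 \<le> x \<Longrightarrow> exp (logplus x) = max 1 x"
proof -
  assume x: "0 \<le> x"
  show ?thesis
  proof (cases "x = 0")
    case True then show ?thesis by (simp add: logplus_def)
  next
    case False
    then have xp: "x > 0" using x by simp
    show ?thesis
    proof (cases "x \<ge> 1")
      case True then show ?thesis using xp by (simp add: logplus_def)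
    next
      case False then have "ln x < 0" using xp by simp
      then show ?thesis using False by (simp add: logplus_def)
    qed
  qed
qed

lemma le_exp_logplus: "0 \<le> x \<Longrightarrow> x \<le> exp (logplus x)"
  by (simp add: exp_logplus)

lemma logplus_mono: "0 \<le> x \<Longrightarrow> x \<le> y \<Longrightarrow> logplus x \<le> logplus y"
  unfolding logplus_def
  by (cases "x = 0") (auto intro: max.coboundedI2)

lemma logplus_le:
  assumes "0 \<le> x" "x \<le> a * exp T" "1 \<le> a" "0 \<le> T"
  shows "logplus x \<le> ln a + T"
proof (cases "x = 0")
  case True then show ?thesis using assms by (simp add: logplus_def)
next
  case False
  then have "x > 0" using assms by simp
  then have "ln x \<le> ln (a * exp T)" using assms by simp
  also have "\<dots> = ln a + T" using assms by (simp add: ln_mult)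
  finally show ?thesis using assms unfolding logplus_def by simp
qed

lemma logplus_max: "0 \<le> a \<Longrightarrow> 0 \<le> b \<Longrightarrow> logplus (max a b) = max (logplus a) (logplus b)"
  by (metis logplus_mono max.absorb1 max.absorb2 max.orderE nle_le)

lemma logplus_powr: assumes "0 \<le> x" "0 \<le> a" shows "logplus (x powr a) = a * logplus x"
proof (cases "x = 0")
  case True then show ?thesis by (simp add: logplus_def)
next
  case False
  then have "x > 0" using assms by simp
  then show ?thesis using assms unfolding logplus_def
    by (simp add: ln_powr max_mult_distrib_left)
qed

lemma poly_bound:
  fixes r :: "complex poly"
  assumes "degree r \<le> m"
  shows "cmod (poly r u) \<le> (\<Sum>k\<le>degree r. cmod (coeff r k)) * max 1 (cmod u) ^ m"
proof -
  have "cmod (poly r u) \<le> (\<Sum>k\<le>degree r. cmod (coeff r k) * cmod u ^ k)"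
    unfolding poly_altdef by (rule order.trans[OF norm_sum]) (simp add: norm_mult norm_power)
  also have "\<dots> \<le> (\<Sum>k\<le>degree r. cmod (coeff r k) * max 1 (cmod u) ^ m)"
  proof (rule sum_mono)
    fix k assume "k \<in> {..degree r}"
    then have "k \<le> m" using assms by simp
    have "cmod u ^ k \<le> max 1 (cmod u) ^ k" by (simp add: power_mono)
    also have "\<dots> \<le> max 1 (cmod u) ^ m" using \<open>k \<le> m\<close> by (simp add: power_increasing)
    finally show "cmod (coeff r k) * cmod u ^ k \<le> cmod (coeff r k) * max 1 (cmod u) ^ m"
      by (simp add: mult_left_mono)
  qed
  finally show ?thesis by (simp add: sum_distrib_right)
qed

lemma p_upper:
  fixes p :: "complex poly"
  shows "logplus (cmod (poly p u)) \<le> ln ((\<Sum>k\<le>degree p. cmod (coeff p k)) + 1) + real (degree p) * logplus (cmod u)"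
proof -
  define S where "S = (\<Sum>k\<le>degree p. cmod (coeff p k))"
  have S0: "S \<ge> 0" unfolding S_def by (simp add: sum_nonneg)
  have "cmod (poly p u) \<le> S * max 1 (cmod u) ^ degree p"
    using poly_bound[of p "degree p" u] by (simp add: S_def)
  also have "\<dots> \<le> (S + 1) * max 1 (cmod u) ^ degree p"
    by (intro mult_right_mono) auto
  also have "max 1 (cmod u) ^ degree p = exp (real (degree p) * logplus (cmod u))"
    by (simp add: exp_logplus exp_of_nat_mult)
  finally show ?thesis unfolding S_def[symmetric]
    by (intro logplus_le) (auto simp: S0 logplus_nonneg)
qed

lemma p_lower:
  fixes p :: "complex poly"
  assumes "lead_coeff p = 1" "degree p \<ge> 1"
  shows "\<exists>K. \<forall>u. real (degree p) * logplus (cmod u) - K \<le> logplus (cmod (poly p u))"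
proof -
  define n where "n = degree p"
  define C where "C = (\<Sum>k<n. cmod (coeff p k))"
  have C0: "C \<ge> 0" unfolding C_def by (simp add: sum_nonneg)
  define R where "R = max 2 (2 * C)"
  have R2: "R \<ge> 2" unfolding R_def by simp
  have "\<forall>u. real n * logplus (cmod u) - (ln 2 + real n * ln R) \<le> logplus (cmod (poly p u))"
  proof
    fix u :: complex
    show "real n * logplus (cmod u) - (ln 2 + real n * ln R) \<le> logplus (cmod (poly p u))"
    proof (cases "cmod u \<ge> R")
      case False
      then have "logplus (cmod u) \<le> logplus R" by (intro logplus_mono) auto
      also have "logplus R = ln R" using R2 unfolding logplus_def by simp
      finally have "real n * logplus (cmod u) \<le> real n * ln R" by (simp add: mult_left_mono)
      moreover have "ln 2 \<ge> (0::real)" by simp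
      ultimately show ?thesis using logplus_nonneg[of "cmod (poly p u)"] by linarith
    next
      case True
      then have u1: "cmod u \<ge> 1" "cmod u \<ge> 2" "cmod u \<ge> 2 * C" using R2 unfolding R_def by auto
      have n1: "n = Suc (n - 1)" using assms n_def by simp
      have split: "poly p u = u ^ n + (\<Sum>k<n. coeff p k * u ^ k)"
      proof -
        have "poly p u = (\<Sum>k\<le>n. coeff p k * u ^ k)" by (simp add: poly_altdef n_def)
        also have "{..n} = insert n {..<n}" by auto
        also have "(\<Sum>k\<in>insert n {..<n}. coeff p k * u ^ k) = coeff p n * u ^ n + (\<Sum>k<n. coeff p k * u ^ k)"
          by (simp add: sum.insert)
        finally show ?thesis using assms(1) n_def by simp
      qed
      have "cmod (\<Sum>k<n. coeff p k * u ^ k) \<le> (\<Sum>k<n. cmod (coeff p k) * cmod u ^ (n - 1))"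
      proof (rule order.trans[OF norm_sum], rule sum_mono)
        fix k assume "k \<in> {..<n}"
        then have "k \<le> n - 1" by simp
        then have "cmod u ^ k \<le> cmod u ^ (n - 1)" using u1 by (simp add: power_increasing)
        then show "cmod (coeff p k * u ^ k) \<le> cmod (coeff p k) * cmod u ^ (n - 1)"
          by (simp add: norm_mult norm_power mult_left_mono)
      qed
      also have "\<dots> = C * cmod u ^ (n - 1)" by (simp add: C_def sum_distrib_right)
      also have "\<dots> \<le> (cmod u / 2) * cmod u ^ (n - 1)" using u1 by (intro mult_right_mono) auto
      finally have rest: "cmod (\<Sum>k<n. coeff p k * u ^ k) \<le> (cmod u / 2) * cmod u ^ (n - 1)" .
      have un: "cmod u ^ n = cmod u * cmod u ^ (n - 1)" by (subst n1) simp
      have "cmod (u ^ n) - cmod (\<Sum>k<n. coeff p k * u ^ k) \<le> cmod (poly p u)"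
        unfolding split by (metis norm_diff_ineq)
      then have low: "cmod u ^ n / 2 \<le> cmod (poly p u)" using rest un by (simp add: norm_power)
      have "cmod u ^ n \<ge> cmod u ^ 1" using u1 assms n_def by (intro power_increasing) auto
      then have un2: "cmod u ^ n \<ge> 2" using u1 by simp
      have pp: "cmod (poly p u) \<ge> 1" using low un2 by simp
      have "ln (cmod u ^ n / 2) \<le> ln (cmod (poly p u))" using low un2 by (subst ln_le_cancel_iff) auto
      moreover have "ln (cmod u ^ n / 2) = real n * ln (cmod u) - ln 2"
      proof -
        have "cmod u > 0" using u1 by linarith
        then have "u \<noteq> 0" by auto
        then show ?thesis using \<open>cmod u > 0\<close> by (simp add: ln_div ln_realpow)
      qed
      moreover have "real n * logplus (cmod u) = real n * ln (cmod u)" using u1 unfolding logplus_def by simp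
      moreover have "logplus (cmod (poly p u)) = ln (cmod (poly p u))" using pp unfolding logplus_def by simp
      moreover have "real n * ln R \<ge> 0" using R2 by simp
      ultimately show ?thesis by linarith
    qed
  qed
  then show ?thesis unfolding n_def by blast
qed

lemma q_bound:
  fixes q :: "complex poly poly" and u v :: complex and a L M :: real and D dd :: nat
  assumes L0: "0 \<le> L" and M0: "0 \<le> M" and hu: "cmod u \<le> exp L" and hv: "cmod v \<le> exp M"
    and a0: "0 \<le> a"
    and key: "\<And>i j. coeff (coeff q j) i \<noteq> 0 \<Longrightarrow> real i \<le> a * (real D - real j)"
    and dq: "degree q \<le> dd"
  shows "cmod (eval2 q u v) \<le> (\<Sum>j\<le>degree q. \<Sum>i\<le>degree (coeff q j). cmod (coeff (coeff q j) i))
           * exp (a * real D * L + real dd * max 0 (M - a * L))"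
proof -
  define T where "T = a * real D * L + real dd * max 0 (M - a * L)"
  define f where "f = (\<lambda>b::complex poly. poly b u)"
  have f0: "f 0 = 0" by (simp add: f_def)
  have "eval2 q u v = (\<Sum>j\<le>degree (map_poly f q). coeff (map_poly f q) j * v ^ j)"
    unfolding eval2_def f_def[symmetric] by (rule poly_altdef)
  also have "\<dots> = (\<Sum>j\<le>degree (map_poly f q). poly (coeff q j) u * v ^ j)"
    by (simp add: coeff_map_poly f0 f_def)
  finally have e: "eval2 q u v = (\<Sum>j\<le>degree (map_poly f q). poly (coeff q j) u * v ^ j)" .
  have "cmod (eval2 q u v) \<le> (\<Sum>j\<le>degree (map_poly f q). cmod (poly (coeff q j) u) * cmod v ^ j)"
    unfolding e by (rule order.trans[OF norm_sum]) (simp add: norm_mult norm_power)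
  also have "\<dots> \<le> (\<Sum>j\<le>degree q. cmod (poly (coeff q j) u) * cmod v ^ j)"
    by (rule sum_mono2) (auto intro: order.trans[OF _ map_poly_degree_leq])
  also have "\<dots> \<le> (\<Sum>j\<le>degree q. \<Sum>i\<le>degree (coeff q j). cmod (coeff (coeff q j) i) * exp T)"
  proof (rule sum_mono)
    fix j assume j: "j \<in> {..degree q}"
    have "cmod (poly (coeff q j) u) * cmod v ^ j \<le>
          (\<Sum>i\<le>degree (coeff q j). cmod (coeff (coeff q j) i) * cmod u ^ i) * cmod v ^ j"
      by (intro mult_right_mono) (auto simp: poly_altdef intro: order.trans[OF norm_sum] simp: norm_mult norm_power)
    also have "\<dots> = (\<Sum>i\<le>degree (coeff q j). cmod (coeff (coeff q j) i) * (cmod u ^ i * cmod v ^ j))"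
      by (simp add: sum_distrib_right mult.assoc)
    also have "\<dots> \<le> (\<Sum>i\<le>degree (coeff q j). cmod (coeff (coeff q j) i) * exp T)"
    proof (rule sum_mono)
      fix i assume "i \<in> {..degree (coeff q j)}"
      show "cmod (coeff (coeff q j) i) * (cmod u ^ i * cmod v ^ j) \<le> cmod (coeff (coeff q j) i) * exp T"
      proof (cases "coeff (coeff q j) i = 0")
        case True then show ?thesis by simp
      next
        case False
        have ki: "real i \<le> a * (real D - real j)" using key[OF False] .
        have jd: "real j \<le> real dd" using j dq by simp
        have "cmod u ^ i \<le> exp L ^ i" using hu by (simp add: power_mono)
        moreover have "cmod v ^ j \<le> exp M ^ j" using hv by (simp add: power_mono)
        ultimately have "cmod u ^ i * cmod v ^ j \<le> exp L ^ i * exp M ^ j"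
          by (intro mult_mono) auto
        also have "\<dots> = exp (real i * L + real j * M)"
          by (simp add: exp_add exp_of_nat_mult)
        also have "real i * L + real j * M \<le> T"
        proof -
          have "real i * L \<le> a * (real D - real j) * L" using ki L0 by (rule mult_right_mono)
          moreover have "real j * (M - a * L) \<le> real j * max 0 (M - a * L)"
            by (intro mult_left_mono) auto
          moreover have "real j * max 0 (M - a * L) \<le> real dd * max 0 (M - a * L)"
            using jd by (intro mult_right_mono) auto
          ultimately show ?thesis unfolding T_def by (simp add: algebra_simps)
        qed
        then have "exp (real i * L + real j * M) \<le> exp T" by simp
        finally show ?thesis by (intro mult_left_mono) auto
      qed
    qed
    finally show "cmod (poly (coeff q j) u) * cmod v ^ j \<le> (\<Sum>i\<le>degree (coeff q j). cmod (coeff (coeff q j) i) * exp T)" .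
  qed
  finally show ?thesis unfolding T_def[symmetric] by (simp add: sum_distrib_right)
qed

lemma green_conv:
  fixes L :: "nat \<Rightarrow> real" and D K :: real
  assumes D1: "D > 1" and hK: "\<And>n. \<bar>L (Suc n) - D * L n\<bar> \<le> K"
  shows "\<exists>G. (\<lambda>n. L n / D ^ n) \<longlonglongrightarrow> G"
proof -
  define g where "g k = L (Suc k) / D ^ Suc k - L k / D ^ k" for k
  have gb: "norm (g k) \<le> (K / D) * (1 / D) ^ k" for k
  proof -
    have "g k = (L (Suc k) - D * L k) / D ^ Suc k" using D1 unfolding g_def
      by (simp add: field_simps)
    then have "norm (g k) = \<bar>L (Suc k) - D * L k\<bar> / D ^ Suc k" using D1 by simp
    also have "\<dots> \<le> K / D ^ Suc k" using D1 hK[of k] by (intro divide_right_mono) auto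
    also have "\<dots> = (K / D) * (1 / D) ^ k" by (simp add: field_simps)
    finally show ?thesis .
  qed
  have "summable (\<lambda>k. (K / D) * (1 / D) ^ k)"
    using D1 by (intro summable_mult summable_geometric) auto
  then have sg: "summable g" by (rule summable_comparison_test[rotated]) (use gb in auto)
  have "(\<lambda>n. L 0 + (\<Sum>k<n. g k)) \<longlonglongrightarrow> L 0 + suminf g"
    by (intro tendsto_add tendsto_const summable_LIMSEQ sg)
  moreover have "L 0 + (\<Sum>k<n. g k) = L n / D ^ n" for n
    unfolding g_def by (subst sum_lessThan_telescope) simp
  ultimately show ?thesis by auto
qed

lemma F_growth:
  fixes F :: "nat \<Rightarrow> real" and B :: real and d :: nat
  assumes F0: "\<And>n. F n \<ge> 0" and B0: "B \<ge> 0" and d2: "d \<ge> 2"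
    and rec: "\<And>n. F (Suc n) \<le> B + real d * F n"
  shows "F n \<le> (F 0 + B) * real d ^ n"
proof -
  have "F n + B \<le> (F 0 + B) * real d ^ n"
  proof (induction n)
    case 0 then show ?case by simp
  next
    case (Suc n)
    have "B * 2 \<le> B * real d" using B0 d2 by (intro mult_left_mono) auto
    then have "F (Suc n) + B \<le> real d * (F n + B)" using rec[of n] by (simp add: algebra_simps)
    also have "\<dots> \<le> real d * ((F 0 + B) * real d ^ n)" using Suc by (intro mult_left_mono) auto
    finally show ?case by (simp add: algebra_simps)
  qed
  then show ?thesis using B0 by simp
qed

lemma alpha_facts:
  fixes p :: "complex poly" and q :: "complex poly poly"
  assumes lq: "lead_coeff (lead_coeff q) = 1" and dpq: "degree p > degree q"
  shows "0 \<le> alpha_exp p q"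
    and "\<And>i j. coeff (coeff q j) i \<noteq> 0 \<Longrightarrow> real i \<le> alpha_exp p q * (real (degree p) - real j)"
proof -
  define A where "A = {real i / (real (degree p) - real j) | i j. coeff (coeff q j) i \<noteq> 0}"
  define N where "N = (\<Sum>j\<le>degree q. degree (coeff q j))"
  have sub: "{(i, j). coeff (coeff q j) i \<noteq> 0} \<subseteq> {..N} \<times> {..degree q}"
  proof
    fix x assume "x \<in> {(i, j). coeff (coeff q j) i \<noteq> 0}"
    then obtain i j where x: "x = (i, j)" and c: "coeff (coeff q j) i \<noteq> 0" by auto
    have "coeff q j \<noteq> 0" using c by auto
    then have j: "j \<le> degree q" by (rule le_degree)
    have "i \<le> degree (coeff q j)" using c by (rule le_degree)
    also have "\<dots> \<le> N" unfolding N_def using j by (intro member_le_sum) auto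
    finally show "x \<in> {..N} \<times> {..degree q}" using x j by auto
  qed
  have "A = (\<lambda>(i, j). real i / (real (degree p) - real j)) ` {(i, j). coeff (coeff q j) i \<noteq> 0}"
    unfolding A_def by auto
  moreover have "finite {(i, j). coeff (coeff q j) i \<noteq> 0}"
    by (rule finite_subset[OF sub]) auto
  ultimately have fin: "finite A" by simp
  have pos: "\<And>i j. coeff (coeff q j) i \<noteq> 0 \<Longrightarrow> real j < real (degree p)"
  proof -
    fix i j assume c: "coeff (coeff q j) i \<noteq> 0"
    have "coeff q j \<noteq> 0" using c by auto
    then have "j \<le> degree q" by (rule le_degree)
    then show "real j < real (degree p)" using dpq by simp
  qed
  have mem: "real i / (real (degree p) - real j) \<in> A" if "coeff (coeff q j) i \<noteq> 0" for i j
    unfolding A_def using that by blast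
  have le: "real i / (real (degree p) - real j) \<le> alpha_exp p q" if "coeff (coeff q j) i \<noteq> 0" for i j
    unfolding alpha_exp_def A_def[symmetric] using fin mem[OF that] by simp
  have "coeff (coeff q (degree q)) (degree (coeff q (degree q))) \<noteq> 0" using lq by simp
  from le[OF this] pos[OF this]
  show "0 \<le> alpha_exp p q" by (smt (verit) divide_nonneg_pos of_nat_0_le_iff)
  fix i j assume c: "coeff (coeff q j) i \<noteq> 0"
  from le[OF c] pos[OF c]
  show "real i \<le> alpha_exp p q * (real (degree p) - real j)"
    by (simp add: pos_divide_le_eq)
qed

theorem corollary4p2:
  fixes p :: "complex poly" and q :: "complex poly poly" and z w :: complex
  assumes "lead_coeff p = 1" and "degree p \<ge> 2"
    and "degree q \<ge> 2" and "lead_coeff (lead_coeff q) = 1"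
    and "degree p > degree q"
  shows "(\<lambda>n. logplus (max (cmod ((poly p ^^ n) z) powr alpha_exp p q) (cmod (Qiter p q n z w)))
             / real (degree p) ^ n)
         \<longlonglongrightarrow> alpha_exp p q * green p z"
proof -
  define \<delta> where "\<delta> = real (degree p)"
  define a where "a = alpha_exp p q"
  have \<delta>1: "\<delta> > 1" using assms(2) unfolding \<delta>_def by simp
  have a0: "0 \<le> a" unfolding a_def using alpha_facts(1)[OF assms(4,5)] .
  have key: "\<And>i j. coeff (coeff q j) i \<noteq> 0 \<Longrightarrow> real i \<le> a * (real (degree p) - real j)"
    unfolding a_def using alpha_facts(2)[OF assms(4,5)] .
  define P where "P n = (poly p ^^ n) z" for n
  define Q where "Q n = Qiter p q n z w" for n
  define L where "L n = logplus (cmod (P n))" for n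
  define M where "M n = logplus (cmod (Q n))" for n
  have PS: "P (Suc n) = poly p (P n)" for n unfolding P_def by simp
  have QS: "Q (Suc n) = eval2 q (P n) (Q n)" for n unfolding Q_def P_def by simp
  have L0: "L n \<ge> 0" for n unfolding L_def by (rule logplus_nonneg)
  have M0: "M n \<ge> 0" for n unfolding M_def by (rule logplus_nonneg)
  define Sp where "Sp = (\<Sum>k\<le>degree p. cmod (coeff p k))"
  obtain K where hK: "\<And>u. \<delta> * logplus (cmod u) - K \<le> logplus (cmod (poly p u))"
    using p_lower[OF assms(1)] assms(2) unfolding \<delta>_def by fastforce
  have Sp0: "Sp \<ge> 0" unfolding Sp_def by (simp add: sum_nonneg)
  define K' where "K' = max K (ln (Sp + 1))"
  have Lup: "L (Suc n) \<le> ln (Sp + 1) + \<delta> * L n" for n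
    unfolding L_def PS Sp_def \<delta>_def by (rule p_upper)
  have Llow: "\<delta> * L n - K \<le> L (Suc n)" for n
    unfolding L_def PS using hK .
  have "\<exists>G. (\<lambda>n. L n / \<delta> ^ n) \<longlonglongrightarrow> G"
  proof (rule green_conv[OF \<delta>1])
    fix n show "\<bar>L (Suc n) - \<delta> * L n\<bar> \<le> K'"
      using Lup[of n] Llow[of n] unfolding K'_def abs_le_iff by (smt (verit) max.cobounded1 max.cobounded2)
  qed
  then obtain G where G: "(\<lambda>n. L n / \<delta> ^ n) \<longlonglongrightarrow> G" by blast
  have green: "green p z = G" unfolding green_def
    using G unfolding L_def P_def \<delta>_def by (rule limI)
  define Sq where "Sq = (\<Sum>j\<le>degree q. \<Sum>i\<le>degree (coeff q j). cmod (coeff (coeff q j) i))"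
  have Sq0: "Sq \<ge> 0" unfolding Sq_def by (intro sum_nonneg) auto
  define F where "F n = max 0 (M n - a * L n)" for n
  define B where "B = ln (Sq + 1) + a * K'"
  have K'0: "K' \<ge> 0" unfolding K'_def using Sp0 by (simp add: le_max_iff_disj)
  have B0: "B \<ge> 0" unfolding B_def using Sq0 a0 K'0 by simp
  have Mrec: "M (Suc n) \<le> ln (Sq + 1) + (a * \<delta> * L n + real (degree q) * F n)" for n
  proof -
    have "cmod (Q (Suc n)) \<le> Sq * exp (a * real (degree p) * L n + real (degree q) * max 0 (M n - a * L n))"
      unfolding QS Sq_def
      by (rule q_bound[OF L0 M0 _ _ a0 key order.refl]) (auto simp: L_def M_def le_exp_logplus)
    also have "\<dots> \<le> (Sq + 1) * exp (a * real (degree p) * L n + real (degree q) * max 0 (M n - a * L n))"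
      by (intro mult_right_mono) auto
    finally show ?thesis unfolding M_def
      by (intro logplus_le) (auto simp: F_def \<delta>_def M_def[symmetric] Sq0 a0 L0 intro!: mult_nonneg_nonneg add_nonneg_nonneg)
  qed
  have Frec: "F (Suc n) \<le> B + real (degree q) * F n" for n
  proof -
    have "a * (\<delta> * L n - K) \<le> a * L (Suc n)" using Llow[of n] a0 by (rule mult_left_mono)
    moreover have "a * K \<le> a * K'" using a0 unfolding K'_def by (intro mult_left_mono) auto
    moreover have "real (degree q) * F n \<ge> 0" unfolding F_def by simp
    ultimately have "M (Suc n) - a * L (Suc n) \<le> B + real (degree q) * F n"
      using Mrec[of n] unfolding B_def by (simp add: algebra_simps)
    then show ?thesis unfolding F_def using B0 \<open>real (degree q) * F n \<ge> 0\<close> by simp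
  qed
  have Fb: "F n \<le> (F 0 + B) * real (degree q) ^ n" for n
    by (rule F_growth[where F=F, OF _ B0 assms(3) Frec]) (simp add: F_def)
  have Flim: "(\<lambda>n. F n / \<delta> ^ n) \<longlonglongrightarrow> 0"
  proof (rule tendsto_sandwich[of "\<lambda>_. 0" _ _ "\<lambda>n. (F 0 + B) * (real (degree q) / \<delta>) ^ n"])
    show "\<forall>\<^sub>F n in sequentially. 0 \<le> F n / \<delta> ^ n" using \<delta>1 by (auto simp: F_def)
    show "\<forall>\<^sub>F n in sequentially. F n / \<delta> ^ n \<le> (F 0 + B) * (real (degree q) / \<delta>) ^ n"
      using Fb \<delta>1 by (auto simp: power_divide divide_right_mono)
    have "(\<lambda>n. (real (degree q) / \<delta>) ^ n) \<longlonglongrightarrow> 0"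
      using \<delta>1 assms(5) unfolding \<delta>_def by (intro LIMSEQ_power_zero) auto
    then show "(\<lambda>n. (F 0 + B) * (real (degree q) / \<delta>) ^ n) \<longlonglongrightarrow> 0"
      by (metis mult_zero_right tendsto_mult_left)
  qed simp
  have E: "logplus (max (cmod (P n) powr a) (cmod (Q n))) = max (a * L n) (M n)" for n
    unfolding L_def M_def by (subst logplus_max) (auto simp: logplus_powr a0)
  have lo: "(\<lambda>n. a * (L n / \<delta> ^ n)) \<longlonglongrightarrow> a * G" by (intro tendsto_mult_left G)
  have hi: "(\<lambda>n. a * (L n / \<delta> ^ n) + F n / \<delta> ^ n) \<longlonglongrightarrow> a * G + 0" by (intro tendsto_add lo Flim)
  have "(\<lambda>n. max (a * L n) (M n) / \<delta> ^ n) \<longlonglongrightarrow> a * G"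
  proof (rule tendsto_sandwich[OF _ _ lo])
    show "\<forall>\<^sub>F n in sequentially. a * (L n / \<delta> ^ n) \<le> max (a * L n) (M n) / \<delta> ^ n"
      using \<delta>1 by (auto intro!: always_eventually divide_right_mono)
    show "\<forall>\<^sub>F n in sequentially. max (a * L n) (M n) / \<delta> ^ n \<le> a * (L n / \<delta> ^ n) + F n / \<delta> ^ n"
    proof (intro always_eventually allI)
      fix n
      have "max (a * L n) (M n) \<le> a * L n + F n" unfolding F_def by simp
      then have "max (a * L n) (M n) / \<delta> ^ n \<le> (a * L n + F n) / \<delta> ^ n"
        using \<delta>1 by (intro divide_right_mono) auto
      then show "max (a * L n) (M n) / \<delta> ^ n \<le> a * (L n / \<delta> ^ n) + F n / \<delta> ^ n"
        by (simp add: add_divide_distrib)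
    qed
    show "(\<lambda>n. a * (L n / \<delta> ^ n) + F n / \<delta> ^ n) \<longlonglongrightarrow> a * G" using hi by simp
  qed
  then show ?thesis unfolding green a_def[symmetric] \<delta>_def[symmetric]
    using E unfolding P_def Q_def by simp
qed

end
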